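(* In the standing setting, if a robust $\boldsymbol b$-flow exists, then there exists an optimal robust $\boldsymbol b$-flow $\boldsymbol f=(f^1,f^2)$ with $c(\boldsymbol f)=\max\{c(f^1),c(f^2)\}=c(f^2)$.
   Context: A RobMCF instance $(G,u,c,\boldsymbol b)$ consists of a finite directed graph (parallel arcs allowed) $G=(V,A)$ whose arc set is partitioned as $A=A^{\mathrm{fix}}\cup A^{\mathrm{free}}$ into fixed and free arcs, capacities $u:A\to\mathbb Z_{\ge0}$, costs $c:A\to\mathbb Z_{\ge0}$, a finite nonempty set of scenarios $\Lambda$, and balances $b^\lambda:V\to\mathbb Z$ with $\sum_{v}b^\lambda(v)=0$. A $b^\lambda$-flow is a function $f^\lambda:A\to\mathbb Z_{\ge0}$ with $f^\lambda(a)\le u(a)$ for all $a$ and $\sum_{a=(v,w)\in A}f^\lambda(a)-\sum_{a=(w,v)\in A}f^\lambda(a)=b^\lambda(v)$ for all $v\in V$; its cost is $c(f^\lambda)=\sum_a c(a)f^\lambda(a)$. A robust $\boldsymbol b$-flow is a tuple $(f^\lambda)_{\lambda\in\Lambda}$ of $b^\lambda$-flows with $f^\lambda(a)=f^{\lambda'}(a)$ for all $a\in A^{\mathrm{fix}}$, $\lambda,\lambda'\in\Lambda$; its cost is $\max_\lambda c(f^\lambda)$; it is optimal if of minimum cost. Series-parallel (SP) digraphs are defined recursively: a single arc $(o,q)$ is an SP digraph with origin $o$ and target $q$; if $G_1$ (origin $o_1$, target $q_1$) and $G_2$ (origin $o_2$, target $q_2$) are SP digraphs, then their series composition (identify $q_1$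 with $o_2$; origin $o_1$, target $q_2$) and their parallel composition (identify $o_1$ with $o_2$ to form the origin and $q_1$ with $q_2$ to form the target) are SP digraphs. Standing setting: $G$ is an SP digraph with origin $o$ and target $q$, $\Lambda=\{1,2\}$, and there are integers $0\le d^1\le d^2$ with $b^\lambda(o)=d^\lambda$, $b^\lambda(q)=-d^\lambda$ and $b^\lambda(v)=0$ for all other $v$ (unique source $o$, unique sink $q$). *)

theory Defs
  imports Main
begin

text \<open>A digraph is given by a set of arcs A of type 'e together with tail and head maps
  (so parallel arcs are allowed).  Its vertex set is the set of endpoints of arcs.\<close>

definition verts :: "('e \<Rightarrow> 'v) \<Rightarrow> ('e \<Rightarrow> 'v) \<Rightarrow> 'e set \<Rightarrow> 'v set" where
  "verts tailf headf A = tailf ` A \<union> headf ` A"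

inductive sp_digraph :: "('e \<Rightarrow> 'v) \<Rightarrow> ('e \<Rightarrow> 'v) \<Rightarrow> 'e set \<Rightarrow> 'v \<Rightarrow> 'v \<Rightarrow> bool"
  for tailf headf where
  arc: "o' \<noteq> q \<Longrightarrow> tailf e = o' \<Longrightarrow> headf e = q \<Longrightarrow> sp_digraph tailf headf {e} o' q"
| series: "sp_digraph tailf headf A1 o' m \<Longrightarrow> sp_digraph tailf headf A2 m q \<Longrightarrow> A1 \<inter> A2 = {}
    \<Longrightarrow> verts tailf headf A1 \<inter> verts tailf headf A2 = {m} \<Longrightarrow> sp_digraph tailf headf (A1 \<union> A2) o' q"
| parallel: "sp_digraph tailf headf A1 o' q \<Longrightarrow> sp_digraph tailf headf A2 o' q \<Longrightarrow> A1 \<inter> A2 = {}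
    \<Longrightarrow> verts tailf headf A1 \<inter> verts tailf headf A2 = {o', q} \<Longrightarrow> sp_digraph tailf headf (A1 \<union> A2) o' q"

definition st_balance :: "'v \<Rightarrow> 'v \<Rightarrow> nat \<Rightarrow> 'v \<Rightarrow> int" where
  "st_balance o' q d v = (if v = o' then int d else if v = q then - int d else 0)"

definition is_b_flow :: "('e \<Rightarrow> 'v) \<Rightarrow> ('e \<Rightarrow> 'v) \<Rightarrow> 'e set \<Rightarrow> ('e \<Rightarrow> nat) \<Rightarrow> ('v \<Rightarrow> int)
    \<Rightarrow> ('e \<Rightarrow> nat) \<Rightarrow> bool" where
  "is_b_flow tailf headf A u b f \<longleftrightarrow>
     (\<forall>a\<in>A. f a \<le> u a) \<and>
     (\<forall>v\<in>verts tailf headf A.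
        int (\<Sum>a\<in>{a\<in>A. tailf a = v}. f a) - int (\<Sum>a\<in>{a\<in>A. headf a = v}. f a) = b v)"

definition flow_cost :: "'e set \<Rightarrow> ('e \<Rightarrow> nat) \<Rightarrow> ('e \<Rightarrow> nat) \<Rightarrow> nat" where
  "flow_cost A c f = (\<Sum>a\<in>A. c a * f a)"

text \<open>Robust b-flow for the two scenarios \<Lambda> = {1,2}: a pair of flows agreeing on fixed arcs.\<close>
definition is_robust_flow :: "('e \<Rightarrow> 'v) \<Rightarrow> ('e \<Rightarrow> 'v) \<Rightarrow> 'e set \<Rightarrow> 'e set \<Rightarrow> ('e \<Rightarrow> nat)
    \<Rightarrow> ('v \<Rightarrow> int) \<Rightarrow> ('v \<Rightarrow> int) \<Rightarrow> ('e \<Rightarrow> nat) \<Rightarrow> ('e \<Rightarrow> nat) \<Rightarrow> bool" where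
  "is_robust_flow tailf headf A Afix u b1 b2 f1 f2 \<longleftrightarrow>
     is_b_flow tailf headf A u b1 f1 \<and> is_b_flow tailf headf A u b2 f2 \<and> (\<forall>a\<in>Afix. f1 a = f2 a)"

definition robust_cost :: "'e set \<Rightarrow> ('e \<Rightarrow> nat) \<Rightarrow> ('e \<Rightarrow> nat) \<Rightarrow> ('e \<Rightarrow> nat) \<Rightarrow> nat" where
  "robust_cost A c f1 f2 = max (flow_cost A c f1) (flow_cost A c f2)"

definition is_optimal_robust_flow :: "('e \<Rightarrow> 'v) \<Rightarrow> ('e \<Rightarrow> 'v) \<Rightarrow> 'e set \<Rightarrow> 'e set
    \<Rightarrow> ('e \<Rightarrow> nat) \<Rightarrow> ('e \<Rightarrow> nat) \<Rightarrow> ('v \<Rightarrow> int) \<Rightarrow> ('v \<Rightarrow> int)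
    \<Rightarrow> ('e \<Rightarrow> nat) \<Rightarrow> ('e \<Rightarrow> nat) \<Rightarrow> bool" where
  "is_optimal_robust_flow tailf headf A Afix u c b1 b2 f1 f2 \<longleftrightarrow>
     is_robust_flow tailf headf A Afix u b1 b2 f1 f2 \<and>
     (\<forall>g1 g2. is_robust_flow tailf headf A Afix u b1 b2 g1 g2 \<longrightarrow>
        robust_cost A c f1 f2 \<le> robust_cost A c g1 g2)"

end

theory Submission imports Defs begin

definition netf :: "('e \<Rightarrow> 'v) \<Rightarrow> ('e \<Rightarrow> 'v) \<Rightarrow> 'e set \<Rightarrow> ('e \<Rightarrow> int) \<Rightarrow> 'v \<Rightarrow> int" where
  "netf t h A f v = (\<Sum>a\<in>{a\<in>A. t a = v}. f a) - (\<Sum>a\<in>{a\<in>A. h a = v}. f a)"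

definition sb :: "'v \<Rightarrow> 'v \<Rightarrow> int \<Rightarrow> 'v \<Rightarrow> int" where
  "sb o' q k v = (if v = o' then k else if v = q then - k else 0)"

lemma sp_props: "sp_digraph t h A o' q \<Longrightarrow> finite A \<and> o' \<in> verts t h A \<and> q \<in> verts t h A \<and> o' \<noteq> q"
  by (induction rule: sp_digraph.induct) (auto simp: verts_def)

lemma net_union: "A1 \<inter> A2 = {} \<Longrightarrow> finite A1 \<Longrightarrow> finite A2 \<Longrightarrow>
  netf t h (A1 \<union> A2) f v = netf t h A1 f v + netf t h A2 f v"
proof -
  assume as: "A1 \<inter> A2 = {}" "finite A1" "finite A2"
  have 1: "{a\<in>A1 \<union> A2. t a = v} = {a\<in>A1. t a = v} \<union> {a\<in>A2. t a = v}" by auto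
  have 2: "{a\<in>A1 \<union> A2. h a = v} = {a\<in>A1. h a = v} \<union> {a\<in>A2. h a = v}" by auto
  show ?thesis unfolding netf_def 1 2
    by (subst sum.union_disjoint, use as in auto)+
qed

lemma net_out: "v \<notin> verts t h A \<Longrightarrow> netf t h A f v = 0"
proof -
  assume "v \<notin> verts t h A"
  then have e1: "{a\<in>A. t a = v} = {}" and e2: "{a\<in>A. h a = v} = {}" by (auto simp: verts_def)
  show ?thesis unfolding netf_def e1 e2 by simp
qed

lemma net_cong: "(\<And>a. a \<in> A \<Longrightarrow> f a = g a) \<Longrightarrow> netf t h A f v = netf t h A g v"
  unfolding netf_def by (metis (no_types, lifting) mem_Collect_eq sum.cong)

lemma handshake: "finite A \<Longrightarrow> (\<Sum>v\<in>verts t h A. netf t h A f v) = 0"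
proof -
  assume fA: "finite A"
  have fV: "finite (verts t h A)" using fA by (simp add: verts_def)
  have "(\<Sum>v\<in>verts t h A. (\<Sum>a\<in>{a\<in>A. t a = v}. f a)) = sum f A"
    by (rule sum.group[OF fA fV]) (auto simp: verts_def)
  moreover have "(\<Sum>v\<in>verts t h A. (\<Sum>a\<in>{a\<in>A. h a = v}. f a)) = sum f A"
    by (rule sum.group[OF fA fV]) (auto simp: verts_def)
  ultimately show ?thesis by (simp add: netf_def sum_subtractf)
qed

lemma two_terminal:
  assumes "finite A" "o' \<in> verts t h A" "q \<in> verts t h A" "o' \<noteq> q"
    "\<And>v. v \<in> verts t h A \<Longrightarrow> v \<noteq> o' \<Longrightarrow> v \<noteq> q \<Longrightarrow> netf t h A f v = 0"
  shows "netf t h A f q = - netf t h A f o'"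
proof -
  have fV: "finite (verts t h A)" using assms(1) by (simp add: verts_def)
  have "0 = (\<Sum>v\<in>verts t h A. netf t h A f v)" using handshake[OF assms(1)] by simp
  also have "\<dots> = netf t h A f o' + (\<Sum>v\<in>verts t h A - {o'}. netf t h A f v)"
    using fV assms(2) by (simp add: sum.remove)
  also have "(\<Sum>v\<in>verts t h A - {o'}. netf t h A f v) = netf t h A f q + (\<Sum>v\<in>verts t h A - {o'} - {q}. netf t h A f v)"
    using fV assms(3,4) by (simp add: sum.remove)
  also have "(\<Sum>v\<in>verts t h A - {o'} - {q}. netf t h A f v) = 0"
    using assms(5) by (intro sum.neutral) auto
  finally show ?thesis by simp
qed

lemma net_single: "netf t h {e} f v = (if t e = v then f e else 0) - (if h e = v then f e else 0)"
proof -
  have "{a\<in>{e}. t a = v} = (if t e = v then {e} else {})" "{a\<in>{e}. h a = v} = (if h e = v then {e} else {})" by auto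
  then show ?thesis unfolding netf_def by simp
qed

lemma net_zero: "netf t h A (\<lambda>_. 0) v = 0" by (simp add: netf_def)

lemma sp_sub:
  assumes "sp_digraph t h A o' q"
  shows "\<And>\<delta> k j. (\<forall>v\<in>verts t h A. netf t h A \<delta> v = sb o' q k v) \<Longrightarrow> 0 \<le> j \<Longrightarrow> j \<le> k \<Longrightarrow>
    \<exists>p. (\<forall>a\<in>A. 0 \<le> p a \<and> p a \<le> max (\<delta> a) 0) \<and> (\<forall>v\<in>verts t h A. netf t h A p v = sb o' q j v)"
  using assms
proof (induction rule: sp_digraph.induct)
  case (arc o' q e)
  have "netf t h {e} \<delta> o' = \<delta> e" using arc by (simp add: net_single)
  moreover have "netf t h {e} \<delta> o' = k" using arc by (simp add: verts_def sb_def)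
  ultimately have de: "\<delta> e = k" by simp
  show ?case
    by (rule exI[of _ "\<lambda>_. j"]) (use arc de in \<open>auto simp: net_single verts_def sb_def\<close>)
next
  case (series A1 o' m A2 q)
  note P1 = sp_props[OF series.hyps(1)] and P2 = sp_props[OF series.hyps(2)]
  have fin: "finite A1" "finite A2" using P1 P2 by auto
  have oA2: "o' \<notin> verts t h A2" using series.hyps(4) P1 by auto
  have qA1: "q \<notin> verts t h A1" using series.hyps(4) P2 by auto
  have VU: "verts t h (A1 \<union> A2) = verts t h A1 \<union> verts t h A2" by (auto simp: verts_def)
  have n1: "netf t h A1 \<delta> v = sb o' q k v" if "v \<in> verts t h A1" "v \<noteq> m" for v
  proof -
    have "v \<notin> verts t h A2" using that series.hyps(4) by auto
    then show ?thesis using series.prems(1) that net_union[OF series.hyps(3) fin, of t h \<delta> v] net_out[of v t h A2 \<delta>] VU by auto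
  qed
  have n2: "netf t h A2 \<delta> v = sb o' q k v" if "v \<in> verts t h A2" "v \<noteq> m" for v
  proof -
    have "v \<notin> verts t h A1" using that series.hyps(4) by auto
    then show ?thesis using series.prems(1) that net_union[OF series.hyps(3) fin, of t h \<delta> v] net_out[of v t h A1 \<delta>] VU by auto
  qed
  have "netf t h A1 \<delta> m = - netf t h A1 \<delta> o'"
    by (rule two_terminal) (use P1 n1 qA1 in \<open>auto simp: sb_def\<close>)
  then have m1: "netf t h A1 \<delta> m = - k" using n1[of o'] P1 by (simp add: sb_def)
  have N1: "\<forall>v\<in>verts t h A1. netf t h A1 \<delta> v = sb o' m k v"
    using n1 m1 qA1 P1 by (auto simp: sb_def)
  have m2: "netf t h A2 \<delta> q = - netf t h A2 \<delta> m"
    by (rule two_terminal) (use P2 n2 oA2 in \<open>auto simp: sb_def\<close>)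
  have N2: "\<forall>v\<in>verts t h A2. netf t h A2 \<delta> v = sb m q k v"
    using n2 m2 oA2 P2 P1 by (auto simp: sb_def)
  obtain p1 where p1: "\<forall>a\<in>A1. 0 \<le> p1 a \<and> p1 a \<le> max (\<delta> a) 0" "\<forall>v\<in>verts t h A1. netf t h A1 p1 v = sb o' m j v"
    using series.IH(1)[OF N1 series.prems(2,3)] by blast
  obtain p2 where p2: "\<forall>a\<in>A2. 0 \<le> p2 a \<and> p2 a \<le> max (\<delta> a) 0" "\<forall>v\<in>verts t h A2. netf t h A2 p2 v = sb m q j v"
    using series.IH(2)[OF N2 series.prems(2,3)] by blast
  define p where "p a = (if a \<in> A1 then p1 a else p2 a)" for a
  have c1: "netf t h A1 p v = netf t h A1 p1 v" for v by (rule net_cong) (simp add: p_def)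
  have c2: "netf t h A2 p v = netf t h A2 p2 v" for v
    by (rule net_cong) (use series.hyps(3) in \<open>auto simp: p_def\<close>)
  show ?case
  proof (rule exI[of _ p], rule conjI; intro ballI)
    fix a assume "a \<in> A1 \<union> A2" then show "0 \<le> p a \<and> p a \<le> max (\<delta> a) 0"
      using p1 p2 by (auto simp: p_def)
  next
    fix v assume v: "v \<in> verts t h (A1 \<union> A2)"
    have e: "netf t h (A1 \<union> A2) p v = netf t h A1 p1 v + netf t h A2 p2 v"
      using net_union[OF series.hyps(3) fin, of t h p v] c1[of v] c2[of v] by linarith
    consider "v = m" | "v \<in> verts t h A1" "v \<noteq> m" | "v \<in> verts t h A2" "v \<noteq> m" using v VU by auto
    then show "netf t h (A1 \<union> A2) p v = sb o' q j v"
    proof cases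
      case 1 then show ?thesis using e p1(2) p2(2) P1 P2 by (auto simp: sb_def)
    next
      case 2
      then have "v \<notin> verts t h A2" using series.hyps(4) by auto
      then show ?thesis using e 2 p1(2) net_out[of v t h A2 p2] qA1 by (auto simp: sb_def)
    next
      case 3
      then have "v \<notin> verts t h A1" using series.hyps(4) by auto
      then show ?thesis using e 3 p2(2) net_out[of v t h A1 p1] oA2 by (auto simp: sb_def)
    qed
  qed
next
  case (parallel A1 o' q A2)
  note P1 = sp_props[OF parallel.hyps(1)] and P2 = sp_props[OF parallel.hyps(2)]
  have fin: "finite A1" "finite A2" using P1 P2 by auto
  have VU: "verts t h (A1 \<union> A2) = verts t h A1 \<union> verts t h A2" by (auto simp: verts_def)
  have n1: "netf t h A1 \<delta> v = 0" if "v \<in> verts t h A1" "v \<noteq> o'" "v \<noteq> q" for v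
  proof -
    have "v \<notin> verts t h A2" using that parallel.hyps(4) by auto
    then show ?thesis using parallel.prems(1) that net_union[OF parallel.hyps(3) fin, of t h \<delta> v] net_out[of v t h A2 \<delta>] VU by (auto simp: sb_def)
  qed
  have n2: "netf t h A2 \<delta> v = 0" if "v \<in> verts t h A2" "v \<noteq> o'" "v \<noteq> q" for v
  proof -
    have "v \<notin> verts t h A1" using that parallel.hyps(4) by auto
    then show ?thesis using parallel.prems(1) that net_union[OF parallel.hyps(3) fin, of t h \<delta> v] net_out[of v t h A1 \<delta>] VU by (auto simp: sb_def)
  qed
  define k1 where "k1 = netf t h A1 \<delta> o'"
  define k2 where "k2 = netf t h A2 \<delta> o'"
  have q1: "netf t h A1 \<delta> q = - k1" unfolding k1_def by (rule two_terminal) (use P1 n1 in auto)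
  have q2: "netf t h A2 \<delta> q = - k2" unfolding k2_def by (rule two_terminal) (use P2 n2 in auto)
  have N1: "\<forall>v\<in>verts t h A1. netf t h A1 \<delta> v = sb o' q k1 v" using n1 q1 k1_def by (auto simp: sb_def)
  have N2: "\<forall>v\<in>verts t h A2. netf t h A2 \<delta> v = sb o' q k2 v" using n2 q2 k2_def by (auto simp: sb_def)
  have kk: "k1 + k2 = k"
    using parallel.prems(1) net_union[OF parallel.hyps(3) fin, of t h \<delta> o'] VU P1 k1_def k2_def by (auto simp: sb_def)
  define j1 where "j1 = min j (max k1 0)"
  define j2 where "j2 = j - j1"
  have j1: "0 \<le> j1" "j1 \<le> max k1 0" using parallel.prems(2) by (auto simp: j1_def)
  have j2: "0 \<le> j2" "j2 \<le> max k2 0" using parallel.prems(2,3) kk by (auto simp: j1_def j2_def)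
  have ex1: "\<exists>p. (\<forall>a\<in>A1. 0 \<le> p a \<and> p a \<le> max (\<delta> a) 0) \<and> (\<forall>v\<in>verts t h A1. netf t h A1 p v = sb o' q j1 v)"
  proof (cases "j1 = 0")
    case True then show ?thesis by (intro exI[of _ "\<lambda>_. 0"]) (auto simp: net_zero sb_def)
  next
    case False then show ?thesis using parallel.IH(1)[OF N1, of j1] j1 by auto
  qed
  have ex2: "\<exists>p. (\<forall>a\<in>A2. 0 \<le> p a \<and> p a \<le> max (\<delta> a) 0) \<and> (\<forall>v\<in>verts t h A2. netf t h A2 p v = sb o' q j2 v)"
  proof (cases "j2 = 0")
    case True then show ?thesis by (intro exI[of _ "\<lambda>_. 0"]) (auto simp: net_zero sb_def)
  next
    case False then show ?thesis using parallel.IH(2)[OF N2, of j2] j2 by auto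
  qed
  obtain p1 where p1: "\<forall>a\<in>A1. 0 \<le> p1 a \<and> p1 a \<le> max (\<delta> a) 0" "\<forall>v\<in>verts t h A1. netf t h A1 p1 v = sb o' q j1 v"
    using ex1 by blast
  obtain p2 where p2: "\<forall>a\<in>A2. 0 \<le> p2 a \<and> p2 a \<le> max (\<delta> a) 0" "\<forall>v\<in>verts t h A2. netf t h A2 p2 v = sb o' q j2 v"
    using ex2 by blast
  define p where "p a = (if a \<in> A1 then p1 a else p2 a)" for a
  have c1: "netf t h A1 p v = netf t h A1 p1 v" for v by (rule net_cong) (simp add: p_def)
  have c2: "netf t h A2 p v = netf t h A2 p2 v" for v
    by (rule net_cong) (use parallel.hyps(3) in \<open>auto simp: p_def\<close>)
  show ?case
  proof (rule exI[of _ p], rule conjI; intro ballI)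
    fix a assume "a \<in> A1 \<union> A2" then show "0 \<le> p a \<and> p a \<le> max (\<delta> a) 0"
      using p1 p2 by (auto simp: p_def)
  next
    fix v assume v: "v \<in> verts t h (A1 \<union> A2)"
    have e: "netf t h (A1 \<union> A2) p v = netf t h A1 p1 v + netf t h A2 p2 v"
      using net_union[OF parallel.hyps(3) fin, of t h p v] c1[of v] c2[of v] by linarith
    consider "v = o'" | "v = q" | "v \<in> verts t h A1" "v \<noteq> o'" "v \<noteq> q" | "v \<in> verts t h A2" "v \<noteq> o'" "v \<noteq> q" using v VU by auto
    then show "netf t h (A1 \<union> A2) p v = sb o' q j v"
    proof cases
      case 1 then show ?thesis using e p1(2) p2(2) P1 P2 j2_def by (auto simp: sb_def)
    next
      case 2 then show ?thesis using e p1(2) p2(2) P1 P2 j2_def by (auto simp: sb_def)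
    next
      case 3
      then have "v \<notin> verts t h A2" using parallel.hyps(4) by auto
      then show ?thesis using e 3 p1(2) net_out[of v t h A2 p2] by (auto simp: sb_def)
    next
      case 4
      then have "v \<notin> verts t h A1" using parallel.hyps(4) by auto
      then show ?thesis using e 4 p2(2) net_out[of v t h A1 p1] by (auto simp: sb_def)
    qed
  qed
qed

lemma bflow_net: "is_b_flow t h A u b f \<longleftrightarrow> (\<forall>a\<in>A. f a \<le> u a) \<and>
   (\<forall>v\<in>verts t h A. netf t h A (\<lambda>a. int (f a)) v = b v)"
  unfolding is_b_flow_def netf_def by (simp add: of_nat_sum)

lemma st_sb: "st_balance o' q d v = sb o' q (int d) v"
  by (simp add: st_balance_def sb_def)

lemma net_diff: "netf t h A (\<lambda>a. f a - g a) v = netf t h A f v - netf t h A g v"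
  unfolding netf_def by (simp add: sum_subtractf)

theorem mainTheorem17:
  fixes tailf headf :: "'e \<Rightarrow> 'v" and A Afix :: "'e set" and u c :: "'e \<Rightarrow> nat"
    and o' q :: 'v and d1 d2 :: nat
  assumes sp: "sp_digraph tailf headf A o' q"
    and fixA: "Afix \<subseteq> A"
    and d: "d1 \<le> d2"
    and ex: "\<exists>g1 g2. is_robust_flow tailf headf A Afix u (st_balance o' q d1) (st_balance o' q d2) g1 g2"
  shows "\<exists>f1 f2. is_optimal_robust_flow tailf headf A Afix u c (st_balance o' q d1) (st_balance o' q d2) f1 f2
           \<and> robust_cost A c f1 f2 = flow_cost A c f2"
  proof -
  let ?b1 = "st_balance o' q d1" and ?b2 = "st_balance o' q d2"
  let ?R = "\<lambda>g. is_robust_flow tailf headf A Afix u ?b1 ?b2 (fst g) (snd g)"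
  obtain g0 where "?R g0" using ex by auto
  then obtain f where fR: "?R f" and fmin: "\<forall>g. ?R g \<longrightarrow> robust_cost A c (fst f) (snd f) \<le> robust_cost A c (fst g) (snd g)"
    using ex_has_least_nat[of ?R g0 "\<lambda>g. robust_cost A c (fst g) (snd g)"] by blast
  define f1 where "f1 = fst f"
  define f2 where "f2 = snd f"
  have F1: "is_b_flow tailf headf A u ?b1 f1" and F2: "is_b_flow tailf headf A u ?b2 f2"
    and Ffix: "\<forall>a\<in>Afix. f1 a = f2 a"
    using fR by (auto simp: is_robust_flow_def f1_def f2_def)
  define \<delta> where "\<delta> a = int (f2 a) - int (f1 a)" for a
  have Nd: "\<forall>v\<in>verts tailf headf A. netf tailf headf A \<delta> v = sb o' q (int d2 - int d1) v"
  proof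
    fix v assume v: "v \<in> verts tailf headf A"
    have "netf tailf headf A \<delta> v = netf tailf headf A (\<lambda>a. int (f2 a)) v - netf tailf headf A (\<lambda>a. int (f1 a)) v"
      unfolding \<delta>_def by (rule net_diff)
    also have "\<dots> = sb o' q (int d2) v - sb o' q (int d1) v"
      using F1 F2 v by (simp add: bflow_net st_sb)
    finally show "netf tailf headf A \<delta> v = sb o' q (int d2 - int d1) v" by (simp add: sb_def)
  qed
  obtain p where p: "\<forall>a\<in>A. 0 \<le> p a \<and> p a \<le> max (\<delta> a) 0"
    and Np: "\<forall>v\<in>verts tailf headf A. netf tailf headf A p v = sb o' q (int d2 - int d1) v"
    using sp_sub[OF sp Nd, of "int d2 - int d1"] d by auto
  define g1 where "g1 a = nat (int (f2 a) - p a)" for a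
  have g1i: "int (g1 a) = int (f2 a) - p a" if "a \<in> A" for a
    using p that by (auto simp: g1_def \<delta>_def)
  have g1le: "g1 a \<le> f2 a" if "a \<in> A" for a using g1i[OF that] p that by auto
  have G1: "is_b_flow tailf headf A u ?b1 g1"
    unfolding bflow_net
  proof (intro conjI ballI)
    fix a assume "a \<in> A" then show "g1 a \<le> u a" using g1le[of a] F2 unfolding is_b_flow_def by (meson order_trans)
  next
    fix v assume v: "v \<in> verts tailf headf A"
    have "netf tailf headf A (\<lambda>a. int (g1 a)) v = netf tailf headf A (\<lambda>a. int (f2 a) - p a) v"
      by (rule net_cong) (simp add: g1i)
    also have "\<dots> = netf tailf headf A (\<lambda>a. int (f2 a)) v - netf tailf headf A p v"
      by (rule net_diff)
    also have "\<dots> = sb o' q (int d2) v - sb o' q (int d2 - int d1) v"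
      using F2 Np v by (simp add: bflow_net st_sb)
    finally show "netf tailf headf A (\<lambda>a. int (g1 a)) v = ?b1 v" by (simp add: sb_def st_sb)
  qed
  have Gfix: "\<forall>a\<in>Afix. g1 a = f2 a"
  proof
    fix a assume a: "a \<in> Afix"
    then have "a \<in> A" using fixA by auto
    have "\<delta> a = 0" using Ffix a by (simp add: \<delta>_def)
    then have "p a = 0" using p \<open>a \<in> A\<close> by (metis max.idem order_antisym)
    then show "g1 a = f2 a" by (simp add: g1_def)
  qed
  have GR: "is_robust_flow tailf headf A Afix u ?b1 ?b2 g1 f2"
    using G1 F2 Gfix by (simp add: is_robust_flow_def)
  have cle: "flow_cost A c g1 \<le> flow_cost A c f2"
    unfolding flow_cost_def by (rule sum_mono) (simp add: g1le)
  have rc: "robust_cost A c g1 f2 = flow_cost A c f2"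
    using cle by (simp add: robust_cost_def)
  have "robust_cost A c g1 f2 \<le> robust_cost A c f1 f2"
    using rc by (simp add: robust_cost_def)
  then have opt: "is_optimal_robust_flow tailf headf A Afix u c ?b1 ?b2 g1 f2"
    unfolding is_optimal_robust_flow_def
  proof (intro conjI allI impI)
    show "is_robust_flow tailf headf A Afix u ?b1 ?b2 g1 f2" by (rule GR)
  next
    fix h1 h2 assume "is_robust_flow tailf headf A Afix u ?b1 ?b2 h1 h2"
    then have "robust_cost A c f1 f2 \<le> robust_cost A c h1 h2"
      using fmin[rule_format, of "(h1, h2)"] by (simp add: f1_def f2_def)
    then show "robust_cost A c g1 f2 \<le> robust_cost A c h1 h2"
      using \<open>robust_cost A c g1 f2 \<le> robust_cost A c f1 f2\<close> by linarith
  qed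
  show ?thesis using opt rc by blast
qed
end
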